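(* Let $d\ge 2$ and $n\ge 2$ be integers and let the $n_c=d^n$ clients be identified with the set $\{0,1,\dots,d-1\}^n$ (grouped by the $d^n$-hypermesh). For each coordinate $k\in\{1,\dots,n\}$ and each client $a$, the group of $a$ in direction $k$ is the set of $d$ clients that agree with $a$ in every coordinate except possibly the $k$-th; thus every client belongs to exactly $n$ groups. Let $M$ be the set of malicious clients, let $\mathcal V$ be the set of groups containing at least one malicious client (the flagged groups), and let the set $I$ of clients identified as malicious consist of those clients all $n$ of whose groups lie in $\mathcal V$. Then (i) every malicious client is identified, i.e. $M\subseteq I$ (true positive rate $100\%$); and (ii) no benign client is identified, i.e. $I\setminus M=\emptyset$ (false positive rate $0\%$), provided that $|M|\le n$, where the case $|M|=n$ is allowed only when at least two malicious clients lie in the same group.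
   Context: This models the detection stage of a secret-sharing-based privacy-preserving quantized federated learning protocol: the server can only examine per-group aggregates, marks a group as suspicious (places it in $\mathcal V$) exactly when it contains a malicious client, and declares a client malicious when all $n$ groups it belongs to are in $\mathcal V$. Two clients are neighbors if their identifiers differ in exactly one coordinate; each group (an edge of the hypermesh) consists of $d$ mutually neighboring clients. *)

theory Defs
  imports Main
begin

text \<open>Clients of the d^n hypermesh: words of length n over {0,...,d-1}
  (coordinates indexed 0..n-1).\<close>
definition clients :: "nat \<Rightarrow> nat \<Rightarrow> nat list set" where
  "clients d n = {a. length a = n \<and> (\<forall>i<n. a ! i < d)}"

definition group :: "nat \<Rightarrow> nat \<Rightarrow> nat list \<Rightarrow> nat \<Rightarrow> nat list set" where
  "group d n a k = {b \<in> clients d n. \<forall>i<n. i \<noteq> k \<longrightarrow> b ! i = a ! i}"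

definition groups :: "nat \<Rightarrow> nat \<Rightarrow> nat list set set" where
  "groups d n = {group d n a k | a k. a \<in> clients d n \<and> k < n}"

definition flagged :: "nat \<Rightarrow> nat \<Rightarrow> nat list set \<Rightarrow> nat list set set" where
  "flagged d n M = {G \<in> groups d n. G \<inter> M \<noteq> {}}"

definition identified :: "nat \<Rightarrow> nat \<Rightarrow> nat list set \<Rightarrow> nat list set" where
  "identified d n M = {a \<in> clients d n. \<forall>k<n. group d n a k \<in> flagged d n M}"

end

theory Submission
  imports Defs
begin

lemma clients_finite: "finite (clients d n)"
proof -
  have "clients d n \<subseteq> {xs. set xs \<subseteq> {..<d} \<and> length xs = n}"
    by (auto simp: clients_def in_set_conv_nth)
  moreover have "finite {xs. set xs \<subseteq> {..<d} \<and> length xs = n}"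
    by (rule finite_lists_length_eq) simp
  ultimately show ?thesis by (rule finite_subset)
qed

lemma self_in_group: "a \<in> clients d n \<Longrightarrow> a \<in> group d n a k"
  by (simp add: group_def)

lemma group_in_groups: "a \<in> clients d n \<Longrightarrow> k < n \<Longrightarrow> group d n a k \<in> groups d n"
  by (auto simp: groups_def)

theorem theorem1:
  fixes d n :: nat and M :: "nat list set"
  assumes "d \<ge> 2" and "n \<ge> 2" and "M \<subseteq> clients d n"
  shows "M \<subseteq> identified d n M
    \<and> ((card M \<le> n \<and>
         (card M = n \<longrightarrow> (\<exists>G \<in> groups d n. \<exists>x y. x \<in> G \<inter> M \<and> y \<in> G \<inter> M \<and> x \<noteq> y)))
        \<longrightarrow> identified d n M - M = {})"
proof (intro conjI impI)
  show "M \<subseteq> identified d n M"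
    using assms(3) self_in_group group_in_groups
    by (fastforce simp: identified_def flagged_def)
next
  assume H: "card M \<le> n \<and>
         (card M = n \<longrightarrow> (\<exists>G \<in> groups d n. \<exists>x y. x \<in> G \<inter> M \<and> y \<in> G \<inter> M \<and> x \<noteq> y))"
  show "identified d n M - M = {}"
  proof (rule ccontr)
    assume "identified d n M - M \<noteq> {}"
    then obtain b where b: "b \<in> identified d n M" "b \<notin> M" by blast
    have bc: "b \<in> clients d n" using b by (simp add: identified_def)
    have "\<forall>k<n. \<exists>m. m \<in> group d n b k \<and> m \<in> M"
      using b by (auto simp: identified_def flagged_def)
    then obtain m where m: "\<And>k. k < n \<Longrightarrow> m k \<in> group d n b k \<and> m k \<in> M" by metis
    have agree: "\<And>k i. k < n \<Longrightarrow> i < n \<Longrightarrow> i \<noteq> k \<Longrightarrow> m k ! i = b ! i"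
      using m by (auto simp: group_def)
    have diff: "m k ! k \<noteq> b ! k" if k: "k < n" for k
    proof
      assume e: "m k ! k = b ! k"
      have "length (m k) = n" "length b = n" using m[OF k] bc
        by (auto simp: group_def clients_def)
      then have "m k = b" using agree[OF k] e by (metis nth_equalityI)
      then show False using m[OF k] b(2) by simp
    qed
    have inj: "inj_on m {..<n}"
    proof (rule inj_onI)
      fix i j assume "i \<in> {..<n}" "j \<in> {..<n}" "m i = m j"
      then show "i = j" using diff agree by (metis lessThan_iff)
    qed
    have fM: "finite M" using assms(3) clients_finite finite_subset by blast
    have sub: "m ` {..<n} \<subseteq> M" using m by auto
    have "card (m ` {..<n}) = n" using inj by (simp add: card_image)
    then have "n \<le> card M" using card_mono[OF fM sub] by simp
    with H have cM: "card M = n" by simp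
    have Meq: "M = m ` {..<n}"
      using card_subset_eq[OF fM sub] cM \<open>card (m ` {..<n}) = n\<close> by simp
    from H cM obtain G x y where G: "G \<in> groups d n" "x \<in> G \<inter> M" "y \<in> G \<inter> M" "x \<noteq> y"
      by blast
    from G(1) obtain a k0 where a: "G = group d n a k0" "k0 < n" by (auto simp: groups_def)
    from G Meq obtain i j where ij: "i < n" "j < n" "x = m i" "y = m j" by blast
    with G(4) have "i \<noteq> j" by auto
    have "i = k0"
    proof -
      have "x ! i \<noteq> y ! i" using ij diff agree \<open>i \<noteq> j\<close> by metis
    then show "i = k0"
    proof (rule contrapos_np)
      assume nk: "i \<noteq> k0"
      have "x ! i = a ! i" using G(2) a ij(1,2) nk by (auto simp: group_def)
      moreover have "y ! i = a ! i" using G(3) a ij(1,2) nk by (auto simp: group_def)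
      ultimately show "x ! i = y ! i" by simp
    qed
    qed
    have "j = k0"
    proof -
      have "x ! j \<noteq> y ! j" using ij diff agree \<open>i \<noteq> j\<close> by metis
    then show "j = k0"
    proof (rule contrapos_np)
      assume nk: "j \<noteq> k0"
      have "x ! j = a ! j" using G(2) a ij(1,2) nk by (auto simp: group_def)
      moreover have "y ! j = a ! j" using G(3) a ij(1,2) nk by (auto simp: group_def)
      ultimately show "x ! j = y ! j" by simp
    qed
    qed
    with \<open>i = k0\<close> \<open>i \<noteq> j\<close> show False by simp
  qed
qed

end
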